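(* Suppose $L$ is in the block upper-triangular form $L=[L^{k,q}]_{k,q=1}^K$ with $L^{k,q}=0$ for $k>q$, where each diagonal block $L^{k,k}$ ($n_k\times n_k$) is irreducible or of dimension one, and for each $k<K$ there is $q>k$ with $L^{k,q}\ne0$. For $k<K$, let $\tilde L^{k,k}$, $D^k$, $\xi^k$, $\Xi^k$, $R^k$ be as defined in the context. Then $Q^k:=\frac12\big[\Xi^kL^{k,k}+(\Xi^kL^{k,k})^\top\big]=R^k+\Xi^kD^k$ is positive definite and $$\Xi^k\le\frac{\rho(\Xi^k)}{\lambda_{\min}(Q^k)}\,Q^k\quad\text{for all }k<K,$$ where $\lambda_{\min}(Q^k)$ is the smallest eigenvalue of $Q^k$ and $M\le N$ means $N-M$ is positive semidefinite.
   Context: $L=D-\mathcal A$ is the Laplacian of a weighted directed graph with nonnegative weights $a_{ij}$ ($a_{ii}=0$), so off-diagonal entries are $\le0$ and row sums of $L$ are zero. Define $\tilde L^{k,k}$ by $\tilde L^{k,k}_{ij}=L^{k,k}_{ij}$ for $i\ne j$ and $\tilde L^{k,k}_{ii}=-\sum_{p\ne i}L^{k,k}_{ip}$; let $D^k=L^{k,k}-\tilde L^{k,k}=\mathrm{diag}(D^k_1,\dots,D^k_{n_k})$ (a nonnegative diagonal matrix). Let $(\xi^k)^\top$ be the positive left eigenvector of $\tilde L^{k,k}$ for eigenvalue $0$ with components summing to $1$ (for $n_k=1$, $\xi^k=1$), $\Xi^k=\mathrm{diag}(\xi^k)$, and $R^k=\frac12[\Xi^k\tilde L^{k,k}+(\Xi^k\tilde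 L^{k,k})^\top]$. $\rho$ denotes spectral radius. *)

theory Defs
  imports "Jordan_Normal_Form.Spectral_Radius"
begin

definition laplacian :: "real mat \<Rightarrow> real mat" where
  "laplacian A = mat_diag (dim_row A) (\<lambda>i. \<Sum>p<dim_col A. A $$ (i, p)) - A"

(* blocks are numbered 1..K; block k has size nk k and starts at row/column block_start nk k *)
definition block_start :: "(nat \<Rightarrow> nat) \<Rightarrow> nat \<Rightarrow> nat" where
  "block_start nk k = (\<Sum>j\<in>{1..<k}. nk j)"

definition block :: "real mat \<Rightarrow> (nat \<Rightarrow> nat) \<Rightarrow> nat \<Rightarrow> nat \<Rightarrow> real mat" where
  "block L nk k q = mat (nk k) (nk q)
     (\<lambda>(i, j). L $$ (block_start nk k + i, block_start nk q + j))"

(* irreducible square matrix: its directed graph (edge i -> j iff i \<noteq> j and M_ij \<noteq> 0)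
   is strongly connected *)
definition irreducible_mat :: "real mat \<Rightarrow> bool" where
  "irreducible_mat M \<longleftrightarrow> (\<forall>i < dim_row M. \<forall>j < dim_row M.
     (i, j) \<in> {(a, b). a < dim_row M \<and> b < dim_row M \<and> a \<noteq> b \<and> M $$ (a, b) \<noteq> 0}\<^sup>+)"

(* \<tilde>L: same off-diagonal entries, diagonal chosen so that row sums vanish *)
definition Ltilde :: "real mat \<Rightarrow> real mat" where
  "Ltilde M = mat (dim_row M) (dim_col M)
     (\<lambda>(i, j). if i = j then - (\<Sum>p\<in>{..<dim_col M} - {i}. M $$ (i, p)) else M $$ (i, j))"

definition Dmat :: "real mat \<Rightarrow> real mat" where
  "Dmat M = M - Ltilde M"

definition Xi :: "real vec \<Rightarrow> real mat" where
  "Xi v = mat_diag (dim_vec v) (\<lambda>i. v $ i)"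

definition sym_part :: "real mat \<Rightarrow> real mat" where
  "sym_part M = (1/2 :: real) \<cdot>\<^sub>m (M + transpose_mat M)"

definition pos_def :: "real mat \<Rightarrow> bool" where
  "pos_def Q \<longleftrightarrow> Q \<in> carrier_mat (dim_row Q) (dim_row Q) \<and>
     (\<forall>x \<in> carrier_vec (dim_row Q). x \<noteq> 0\<^sub>v (dim_row Q) \<longrightarrow> x \<bullet> (Q *\<^sub>v x) > 0)"

definition loewner_le :: "real mat \<Rightarrow> real mat \<Rightarrow> bool" where
  "loewner_le M N \<longleftrightarrow> (\<forall>x \<in> carrier_vec (dim_row M). 0 \<le> x \<bullet> ((N - M) *\<^sub>v x))"

definition lambda_min :: "real mat \<Rightarrow> real" where
  "lambda_min Q = Min {e. eigenvalue Q e}"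

definition rho :: "real mat \<Rightarrow> real" where
  "rho M = spectral_radius (map_mat complex_of_real M)"

end

theory Submission imports Defs "HOL-Analysis.Function_Topology" begin

lemma coord_cont: "continuous_on S (\<lambda>f::nat\<Rightarrow>real. f i)"
  by (rule continuous_on_subset[of UNIV]) simp_all

lemma compact_box: "compact (PiE UNIV (\<lambda>i::nat. if i < n then {-1..1} else {0::real}))"
proof -
  have "compactin (product_topology (\<lambda>i. euclidean) UNIV) (PiE UNIV (\<lambda>i::nat. if i < n then {-1..1} else {0::real}))"
    by (subst compactin_PiE) auto
  thus ?thesis by (simp add: euclidean_product_topology)
qed

lemma closed_sphere: "closed {f::nat\<Rightarrow>real. (\<Sum>i<n. (f i)^2) = 1}"
  by (rule closed_Collect_eq) (intro continuous_intros coord_cont)+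

lemma qf_sum: assumes "M \<in> carrier_mat n n" "x \<in> carrier_vec n"
  shows "x \<bullet> (M *\<^sub>v x) = (\<Sum>i<n. \<Sum>j<n. x$i * M$$(i,j) * x$j)"
  using assms by (auto simp: scalar_prod_def mult_mat_vec_def row_def sum_distrib_left lessThan_atLeast0 ac_simps intro!: sum.cong)

lemma rayleigh:
  fixes Q :: "real mat"
  assumes Q: "Q \<in> carrier_mat n n" and sym: "\<And>i j. i<n \<Longrightarrow> j<n \<Longrightarrow> Q$$(i,j) = Q$$(j,i)" and n: "n>0"
  shows "\<exists>\<mu>. eigenvalue Q \<mu> \<and> (\<forall>x\<in>carrier_vec n. \<mu> * (x \<bullet> x) \<le> x \<bullet> (Q *\<^sub>v x))"
proof -
  define g where "g = (\<lambda>f::nat\<Rightarrow>real. \<Sum>i<n. \<Sum>j<n. f i * Q$$(i,j) * f j)"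
  define S where "S = PiE UNIV (\<lambda>i::nat. if i<n then {-1..1} else {0::real}) \<inter> {f. (\<Sum>i<n. (f i)^2) = 1}"
  have cS: "compact S" unfolding S_def by (intro compact_Int_closed compact_box closed_sphere)
  have e0: "(\<lambda>i. if i = 0 then 1 else 0::real) \<in> S"
  proof -
    have "(\<Sum>i<n. (if i = 0 then 1 else 0::real)^2) = (\<Sum>i<n. if i = 0 then 1 else 0)"
      by (rule sum.cong) auto
    also have "\<dots> = 1" using n by (simp add: sum.delta)
    finally show ?thesis using n by (auto simp: S_def PiE_iff)
  qed
  have cg: "continuous_on S g" unfolding g_def by (intro continuous_intros coord_cont)
  obtain f where fS: "f \<in> S" and fmin: "\<And>y. y\<in>S \<Longrightarrow> g f \<le> g y"
    using continuous_attains_inf[OF cS _ cg] e0 by blast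
  define \<mu> where "\<mu> = g f"
  have f1: "(\<Sum>i<n. (f i)^2) = 1" using fS S_def by auto
  have key: "\<mu> * (\<Sum>i<n. (z i)^2) \<le> g z" for z
  proof (cases "(\<Sum>i<n. (z i)^2) = 0")
    case True
    then have "\<forall>i<n. z i = 0" by (simp add: sum_nonneg_eq_0_iff)
    then have "g z = 0" by (simp add: g_def)
    with True show ?thesis by simp
  next
    case False
    define r where "r = sqrt (\<Sum>i<n. (z i)^2)"
    have s0: "(\<Sum>i<n. (z i)^2) > 0" using False sum_nonneg[of "{..<n}" "\<lambda>i. (z i)^2"] by auto
    hence r: "r > 0" by (simp add: r_def)
    have r2: "r^2 = (\<Sum>i<n. (z i)^2)" using s0 by (simp add: r_def)
    define y where "y = (\<lambda>i. if i<n then z i / r else 0)"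
    have "y \<in> S"
    proof -
      have "\<bar>z i\<bar> \<le> r" if "i<n" for i
      proof -
        have "(z i)^2 \<le> r^2" unfolding r2 by (rule member_le_sum) (use that in auto)
        thus ?thesis using r power2_le_imp_le[of "\<bar>z i\<bar>" r] by simp
      qed
      hence "y i \<in> (if i<n then {-1..1} else {0})" for i
        using r by (auto simp: y_def abs_le_iff divide_le_eq le_divide_eq) (smt (verit))
      moreover have "(\<Sum>i<n. (y i)^2) = 1"
      proof -
        have "(\<Sum>i<n. (y i)^2) = (\<Sum>i<n. (z i)^2) / r^2"
          by (simp add: y_def sum_divide_distrib power_divide)
        thus ?thesis using r2 s0 by simp
      qed
      ultimately show ?thesis by (auto simp: S_def PiE_iff)
    qed
    hence "\<mu> \<le> g y" using fmin \<mu>_def by auto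
    also have "g y = g z / r^2"
      by (simp add: g_def y_def sum_divide_distrib power2_eq_square)
    finally show ?thesis using r r2 s0 by (simp add: le_divide_eq mult.commute)
  qed
  define rr where "rr i = (\<Sum>j<n. Q$$(i,j) * f j) - \<mu> * f i" for i
  have swap: "(\<Sum>i<n. \<Sum>j<n. f i * Q$$(i,j) * w j) = (\<Sum>i<n. \<Sum>j<n. w i * Q$$(i,j) * f j)" for w
    apply (subst sum.swap) using sym by (auto intro!: sum.cong simp: ac_simps)
  have expand: "g (\<lambda>i. f i + t * w i) = g f + 2*t*(\<Sum>i<n. w i * (\<Sum>j<n. Q$$(i,j)*f j)) + t^2 * g w" for t w
  proof -
    have "g (\<lambda>i. f i + t * w i) = (\<Sum>i<n. \<Sum>j<n. f i * Q$$(i,j) * f j + t * (f i * Q$$(i,j) * w j)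
       + t * (w i * Q$$(i,j) * f j) + t^2 * (w i * Q$$(i,j) * w j))"
      by (simp add: g_def algebra_simps power2_eq_square)
    also have "\<dots> = g f + t * (\<Sum>i<n. \<Sum>j<n. f i * Q$$(i,j) * w j) + t * (\<Sum>i<n. \<Sum>j<n. w i * Q$$(i,j) * f j) + t^2 * g w"
      by (simp add: g_def sum.distrib sum_distrib_left)
    also have "\<dots> = g f + 2*t*(\<Sum>i<n. w i * (\<Sum>j<n. Q$$(i,j)*f j)) + t^2 * g w"
      unfolding swap by (simp add: sum_distrib_left ac_simps)
    finally show ?thesis .
  qed
  have expand2: "(\<Sum>i<n. (f i + t*w i)^2) = 1 + 2*t*(\<Sum>i<n. w i * f i) + t^2 * (\<Sum>i<n. (w i)^2)" for t w
  proof -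
    have "(\<Sum>i<n. (f i + t*w i)^2) = (\<Sum>i<n. (f i)^2 + 2*t*(w i * f i) + t^2 * (w i)^2)"
      by (simp add: algebra_simps power2_eq_square)
    also have "\<dots> = 1 + 2*t*(\<Sum>i<n. w i * f i) + t^2 * (\<Sum>i<n. (w i)^2)"
      by (simp add: sum.distrib sum_distrib_left f1)
    finally show ?thesis .
  qed
  define a where "a = (\<Sum>i<n. (rr i)^2)"
  define b where "b = g rr - \<mu> * (\<Sum>i<n. (rr i)^2)"
  have b0: "b \<ge> 0" using key[of rr] by (simp add: b_def)
  have aeq: "a = (\<Sum>i<n. rr i * (\<Sum>j<n. Q$$(i,j)*f j)) - \<mu> * (\<Sum>i<n. rr i * f i)"
  proof -
    have "(\<Sum>i<n. (rr i)^2) = (\<Sum>i<n. rr i * (\<Sum>j<n. Q$$(i,j)*f j) - \<mu> * (rr i * f i))"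
    proof (rule sum.cong)
      fix i
      have "(rr i)^2 = rr i * ((\<Sum>j<n. Q$$(i,j)*f j) - \<mu> * f i)" by (simp add: rr_def power2_eq_square)
      thus "(rr i)^2 = rr i * (\<Sum>j<n. Q$$(i,j)*f j) - \<mu> * (rr i * f i)" by (simp add: algebra_simps)
    qed simp
    thus ?thesis by (simp add: a_def sum_subtractf sum_distrib_left)
  qed
  have ineq: "0 \<le> 2*t*a + t^2*b" for t
  proof -
    have "\<mu> * (\<Sum>i<n. (f i + t*rr i)^2) \<le> g (\<lambda>i. f i + t * rr i)" by (rule key)
    thus ?thesis unfolding expand expand2 aeq b_def \<mu>_def by (simp add: algebra_simps)
  qed
  have a0: "a = 0"
  proof (rule ccontr)
    assume "a \<noteq> 0"
    hence ap: "a^2 > 0" by simp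
    define t where "t = -a/(b+1)"
    have b1: "b + 1 \<noteq> 0" using b0 by simp
    have tb: "t*(b+1) = -a" using b1 by (simp add: t_def)
    have "0 \<le> 2*t*a + t^2*b" by (rule ineq)
    hence "0 \<le> (2*t*a + t^2*b)*(b+1)^2" by simp
    also have "(2*t*a + t^2*b)*(b+1)^2 = 2*a*(t*(b+1))*(b+1) + (t*(b+1))^2*b"
      by (simp add: algebra_simps power2_eq_square)
    also have "\<dots> = -(a^2*(b+2))" unfolding tb by (simp add: algebra_simps power2_eq_square)
    finally show False using ap b0 by (smt (verit) mult_pos_pos)
  qed
  hence rr0: "\<forall>i<n. rr i = 0" by (simp add: a_def sum_nonneg_eq_0_iff)
  define v where "v = vec n f"
  have "eigenvector Q v \<mu>"
  proof -
    have "v \<noteq> 0\<^sub>v n"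
    proof
      assume "v = 0\<^sub>v n"
      hence "\<forall>i<n. f i = 0" by (metis v_def index_vec index_zero_vec(1))
      thus False using f1 by simp
    qed
    moreover have "Q *\<^sub>v v = \<mu> \<cdot>\<^sub>v v"
      using Q rr0 by (auto simp: v_def rr_def mult_mat_vec_def row_def scalar_prod_def lessThan_atLeast0 intro!: eq_vecI)
    ultimately show ?thesis using Q by (auto simp: eigenvector_def v_def)
  qed
  hence "eigenvalue Q \<mu>" by (auto simp: eigenvalue_def)
  moreover have "\<forall>x\<in>carrier_vec n. \<mu> * (x \<bullet> x) \<le> x \<bullet> (Q *\<^sub>v x)"
  proof
    fix x :: "real vec" assume x: "x \<in> carrier_vec n"
    have "\<mu> * (\<Sum>i<n. (x$i)^2) \<le> g (\<lambda>i. x$i)" by (rule key)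
    moreover have "x \<bullet> x = (\<Sum>i<n. (x$i)^2)" using x by (simp add: scalar_prod_def lessThan_atLeast0 power2_eq_square)
    moreover have "x \<bullet> (Q *\<^sub>v x) = g (\<lambda>i. x$i)" using qf_sum[OF Q x] by (simp add: g_def)
    ultimately show "\<mu> * (x \<bullet> x) \<le> x \<bullet> (Q *\<^sub>v x)" by simp
  qed
  ultimately show ?thesis by blast
qed

lemma qf_identity:
  fixes aa :: "nat \<Rightarrow> nat \<Rightarrow> real" and xi d x :: "nat \<Rightarrow> real"
  assumes eig: "\<And>j. j<n \<Longrightarrow> xi j * (\<Sum>p<n. aa j p) = (\<Sum>i<n. xi i * aa i j)"
  shows "(\<Sum>i<n. \<Sum>j<n. xi i * ((if i=j then (\<Sum>p<n. aa i p) + d i else 0) - aa i j) * x i * x j)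
   = (\<Sum>i<n. xi i * d i * (x i)^2) + 1/2 * (\<Sum>i<n. \<Sum>j<n. xi i * aa i j * (x i - x j)^2)"
proof -
  define rs where "rs i = (\<Sum>p<n. aa i p)" for i
  define C where "C = (\<Sum>i<n. \<Sum>j<n. xi i * aa i j * x i * x j)"
  have "(\<Sum>i<n. \<Sum>j<n. xi i * ((if i=j then rs i + d i else 0) - aa i j) * x i * x j)
      = (\<Sum>i<n. \<Sum>j<n. (if i = j then xi i * (rs i + d i) * x i * x i else 0) - xi i * aa i j * x i * x j)"
    by (intro sum.cong refl) (auto simp: algebra_simps)
  also have "\<dots> = (\<Sum>i<n. xi i * (rs i + d i) * x i * x i) - C"
    by (simp add: sum_subtractf C_def sum.delta)
  finally have L: "(\<Sum>i<n. \<Sum>j<n. xi i * ((if i=j then rs i + d i else 0) - aa i j) * x i * x j)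
      = (\<Sum>i<n. xi i * d i * (x i)^2) + (\<Sum>i<n. xi i * rs i * (x i)^2) - C"
    by (simp add: algebra_simps sum.distrib power2_eq_square)
  have A1: "(\<Sum>i<n. xi i * rs i * (x i)^2) = (\<Sum>i<n. \<Sum>j<n. xi i * aa i j * (x i)^2)"
    by (simp add: rs_def sum_distrib_left sum_distrib_right algebra_simps)
  have A2: "(\<Sum>i<n. xi i * rs i * (x i)^2) = (\<Sum>i<n. \<Sum>j<n. xi i * aa i j * (x j)^2)"
  proof -
    have "(\<Sum>i<n. xi i * rs i * (x i)^2) = (\<Sum>j<n. (\<Sum>i<n. xi i * aa i j) * (x j)^2)"
      using eig by (intro sum.cong refl) (simp add: rs_def)
    also have "\<dots> = (\<Sum>j<n. \<Sum>i<n. xi i * aa i j * (x j)^2)" by (simp add: sum_distrib_right)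
    also have "\<dots> = (\<Sum>i<n. \<Sum>j<n. xi i * aa i j * (x j)^2)" by (rule sum.swap)
    finally show ?thesis .
  qed
  have R: "(\<Sum>i<n. \<Sum>j<n. xi i * aa i j * (x i - x j)^2) =
     (\<Sum>i<n. \<Sum>j<n. xi i * aa i j * (x i)^2) + (\<Sum>i<n. \<Sum>j<n. xi i * aa i j * (x j)^2) - 2 * C"
  proof -
    have "(\<Sum>i<n. \<Sum>j<n. xi i * aa i j * (x i - x j)^2) =
       (\<Sum>i<n. \<Sum>j<n. xi i * aa i j * (x i)^2 + xi i * aa i j * (x j)^2 - 2 * (xi i * aa i j * x i * x j))"
      by (intro sum.cong refl) (simp add: algebra_simps power2_eq_square)
    thus ?thesis by (simp add: sum.distrib sum_subtractf C_def sum_distrib_left)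
  qed
  show ?thesis unfolding rs_def[symmetric] L R using A1 A2 by simp
qed

lemma sym_part_car: "M \<in> carrier_mat n n \<Longrightarrow> sym_part M \<in> carrier_mat n n"
  by (simp add: sym_part_def)

lemma sym_part_ent: "M \<in> carrier_mat n n \<Longrightarrow> i<n \<Longrightarrow> j<n \<Longrightarrow>
   sym_part M $$ (i,j) = 1/2 * (M$$(i,j) + M$$(j,i))"
  by (simp add: sym_part_def)

lemma sym_part_mat[simp]: "i<n \<Longrightarrow> j<n \<Longrightarrow>
   sym_part (mat n n f) $$ (i,j) = 1/2 * (f (i,j) + f (j,i))"
  by (simp add: sym_part_def)

lemma Xi_mult: "v \<in> carrier_vec n \<Longrightarrow> M \<in> carrier_mat n n \<Longrightarrow>
   Xi v * M = mat n n (\<lambda>(i,j). v$i * M$$(i,j))"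
  unfolding Xi_def by (simp add: mat_diag_mult_left)

lemma Ltilde_car: "M \<in> carrier_mat n n \<Longrightarrow> Ltilde M \<in> carrier_mat n n"
  by (simp add: Ltilde_def)

lemma Ltilde_off: "M \<in> carrier_mat n n \<Longrightarrow> i<n \<Longrightarrow> j<n \<Longrightarrow> i \<noteq> j \<Longrightarrow> Ltilde M $$ (i,j) = M$$(i,j)"
  by (simp add: Ltilde_def)

lemma sym_decomp:
  assumes M: "M \<in> carrier_mat n n" and v: "v \<in> carrier_vec n"
  shows "sym_part (Xi v * M) = sym_part (Xi v * Ltilde M) + Xi v * Dmat M"
proof -
  have Lt: "Ltilde M \<in> carrier_mat n n" using M by (rule Ltilde_car)
  have D: "Dmat M \<in> carrier_mat n n" using M Lt unfolding Dmat_def by (metis minus_carrier_mat)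
  show ?thesis
  proof (rule eq_matI)
    fix i j assume i: "i < dim_row (sym_part (Xi v * Ltilde M) + Xi v * Dmat M)"
      and j: "j < dim_col (sym_part (Xi v * Ltilde M) + Xi v * Dmat M)"
    hence i: "i<n" and j: "j<n" using Lt D v by (auto simp: Xi_def mat_diag_def simp: sym_part_def Xi_mult[OF v Lt])
    show "sym_part (Xi v * M) $$ (i,j) = (sym_part (Xi v * Ltilde M) + Xi v * Dmat M) $$ (i,j)"
      using i j M Lt D Ltilde_off[OF M i j] Ltilde_off[OF M j i]
      by (cases "i = j") (simp_all add: sym_part_ent Xi_mult[OF v] Dmat_def sym_part_car algebra_simps)
  qed (use M Lt D v in \<open>auto simp: sym_part_def Xi_mult[OF v] Xi_def mat_diag_def\<close>)
qed

lemma rho_Xi: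
  assumes v: "v \<in> carrier_vec n" and i: "i < n"
  shows "\<bar>v$i\<bar> \<le> rho (Xi v)"
proof -
  define C where "C = map_mat complex_of_real (Xi v)"
  have C: "C \<in> carrier_mat n n" using v by (simp add: C_def Xi_def)
  have "eigenvector C (unit_vec n i) (complex_of_real (v$i))"
    unfolding eigenvector_def
  proof (intro conjI)
    show "C *\<^sub>v unit_vec n i = complex_of_real (v $ i) \<cdot>\<^sub>v unit_vec n i"
    proof (rule eq_vecI)
      fix j assume "j < dim_vec (complex_of_real (v $ i) \<cdot>\<^sub>v unit_vec n i)"
      hence j: "j < n" by simp
      have "(C *\<^sub>v unit_vec n i) $ j = row C j \<bullet> unit_vec n i" using C j by simp
      also have "\<dots> = row C j $ i" using C i by (intro scalar_prod_right_unit) auto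
      also have "\<dots> = C $$ (j, i)" using C i j by simp
      also have "\<dots> = (complex_of_real (v $ i) \<cdot>\<^sub>v unit_vec n i) $ j"
        using i j v by (simp add: C_def Xi_def mat_diag_def unit_vec_def)
      finally show "(C *\<^sub>v unit_vec n i) $ j = (complex_of_real (v $ i) \<cdot>\<^sub>v unit_vec n i) $ j" .
    qed (use C in auto)
  next
    show "unit_vec n i \<noteq> 0\<^sub>v (dim_row C)" using C i unit_vec_nonzero[OF i] by simp
  qed (use C i in auto)
  hence "complex_of_real (v$i) \<in> spectrum C" by (auto simp: spectrum_def eigenvalue_def)
  hence "norm (complex_of_real (v$i)) \<le> spectral_radius C"
    using spectral_radius_mem_max(2)[OF C] i by (metis gr_implies_not0 imageI neq0_conv)
  thus ?thesis by (simp add: rho_def C_def)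
qed

lemma block_result:
  fixes A :: "real mat" and N K k :: nat and nk :: "nat \<Rightarrow> nat" and v :: "real vec"
  assumes A_carrier: "A \<in> carrier_mat N N"
    and A_nonneg: "\<forall>i < N. \<forall>j < N. 0 \<le> A $$ (i, j)"
    and A_diag: "\<forall>i < N. A $$ (i, i) = 0"
    and k1: "1 \<le> k" and kK: "k < K"
    and nk_pos: "\<forall>k \<in> {1..K}. nk k \<ge> 1"
    and N_sum: "N = (\<Sum>k\<in>{1..K}. nk k)"
    and irr: "irreducible_mat (block (laplacian A) nk k k) \<or> nk k = 1"
    and coup: "\<exists>q \<in> {k<..K}. block (laplacian A) nk k q \<noteq> 0\<^sub>m (nk k) (nk q)"
    and v_dim: "v \<in> carrier_vec (nk k)"
    and v_pos: "\<forall>i < nk k. v $ i > 0"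
    and v_eig: "transpose_mat (Ltilde (block (laplacian A) nk k k)) *\<^sub>v v = 0\<^sub>v (nk k)"
  shows "let Lkk = block (laplacian A) nk k k;
          X = Xi v;
          R = sym_part (X * Ltilde Lkk);
          Q = sym_part (X * Lkk)
      in Q = R + X * Dmat Lkk
         \<and> pos_def Q
         \<and> loewner_le X ((rho X / lambda_min Q) \<cdot>\<^sub>m Q)"
proof -
  define L where "L = laplacian A"
  define n where "n = nk k"
  define s where "s = block_start nk k"
  have n1: "n \<ge> 1" using nk_pos k1 kK by (auto simp: n_def)
  have v_n: "v \<in> carrier_vec n" using v_dim by (simp add: n_def)
  have vpos: "\<And>i. i < n \<Longrightarrow> v $ i > 0" using v_pos by (simp add: n_def)
  have bs_bound: "block_start nk q + nk q \<le> N" if "1 \<le> q" "q \<le> K" for q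
  proof -
    have "block_start nk q + nk q = (\<Sum>j\<in>{1..<Suc q}. nk j)"
      unfolding block_start_def using that by (simp add: sum.atLeastLessThan_Suc)
    also have "\<dots> \<le> (\<Sum>j\<in>{1..K}. nk j)" by (rule sum_mono2) (use that in auto)
    finally show ?thesis using N_sum by simp
  qed
  have bs_mono: "s + n \<le> block_start nk q" if "k < q" for q
  proof -
    have "s + n = (\<Sum>j\<in>{1..<Suc k}. nk j)"
      unfolding s_def n_def block_start_def using k1 by (simp add: sum.atLeastLessThan_Suc)
    also have "\<dots> \<le> (\<Sum>j\<in>{1..<q}. nk j)" by (rule sum_mono2) (use that in auto)
    finally show ?thesis by (simp add: block_start_def)
  qed
  have sn: "s + n \<le> N" using bs_bound[of k] k1 kK by (simp add: s_def n_def)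
  have Lent: "L$$(a,b) = (if a=b then (\<Sum>p<N. A$$(a,p)) else 0) - A$$(a,b)" if "a<N" "b<N" for a b
    using that A_carrier by (simp add: L_def laplacian_def mat_diag_def)
  define aa where "aa i j = A$$(s+i,s+j)" for i j
  define rs where "rs i = (\<Sum>p<n. aa i p)" for i
  define d where "d i = (\<Sum>p<N. A$$(s+i,p)) - rs i" for i
  define Lkk where "Lkk = block L nk k k"
  have Lkk_car: "Lkk \<in> carrier_mat n n" by (simp add: Lkk_def block_def n_def)
  have Lkk_ent: "Lkk$$(i,j) = (if i=j then rs i + d i else 0) - aa i j" if "i<n" "j<n" for i j
  proof -
    have "Lkk$$(i,j) = L$$(s+i,s+j)" using that by (simp add: Lkk_def block_def n_def s_def)
    also have "\<dots> = (if i=j then rs i + d i else 0) - aa i j"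
      using that sn Lent[of "s+i" "s+j"] by (simp add: aa_def d_def)
    finally show ?thesis .
  qed
  have aa_nn: "aa i j \<ge> 0" if "i<n" "j<n" for i j using that sn A_nonneg by (simp add: aa_def)
  have aa_diag: "aa i i = 0" if "i<n" for i using that sn A_diag by (simp add: aa_def)
  define Lt where "Lt = Ltilde Lkk"
  have Lt_car: "Lt \<in> carrier_mat n n" using Lkk_car by (simp add: Lt_def Ltilde_car)
  have Lt_ent: "Lt$$(i,j) = (if i=j then rs i else 0) - aa i j" if "i<n" "j<n" for i j
  proof (cases "i=j")
    case False thus ?thesis using Ltilde_off[OF Lkk_car that False] Lkk_ent[OF that] by (simp add: Lt_def)
  next
    case True
    have "Lt$$(i,i) = - (\<Sum>p\<in>{..<n}-{i}. Lkk$$(i,p))" using Lkk_car that by (simp add: Lt_def Ltilde_def)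
    also have "\<dots> = - (\<Sum>p\<in>{..<n}-{i}. - aa i p)"
      by (intro arg_cong[where f=uminus] sum.cong refl) (use that Lkk_ent in auto)
    also have "\<dots> = (\<Sum>p\<in>{..<n}-{i}. aa i p)" by (simp add: sum_negf)
    also have "\<dots> = rs i" using sum.remove[of "{..<n}" i "aa i"] aa_diag that by (simp add: rs_def)
    finally show ?thesis using True aa_diag that by simp
  qed
  have v_eig': "transpose_mat Lt *\<^sub>v v = 0\<^sub>v n" using v_eig by (simp add: Lt_def Lkk_def L_def n_def)
  have eig: "v$j * rs j = (\<Sum>i<n. v$i * aa i j)" if "j<n" for j
  proof -
    have "0 = (transpose_mat Lt *\<^sub>v v) $ j" using v_eig' that by simp
    also have "\<dots> = (\<Sum>i<n. Lt$$(i,j) * v$i)"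
      using Lt_car v_n that by (simp add: scalar_prod_def lessThan_atLeast0)
    also have "\<dots> = (\<Sum>i<n. (if i = j then v$j * rs j else 0) - v$i * aa i j)"
      by (intro sum.cong refl) (auto simp: Lt_ent that algebra_simps)
    also have "\<dots> = v$j * rs j - (\<Sum>i<n. v$i * aa i j)"
      using that by (simp add: sum_subtractf sum.delta)
    finally show ?thesis by simp
  qed
  have rs_img: "rs i = (\<Sum>p\<in>(\<lambda>p. s+p) ` {..<n}. A$$(s+i,p))" for i
    by (simp add: rs_def aa_def sum.reindex inj_on_def)
  have d_nn: "d i \<ge> 0" if "i<n" for i
  proof -
    have "rs i \<le> (\<Sum>p<N. A$$(s+i,p))" unfolding rs_img
      by (rule sum_mono2) (use sn A_nonneg that in auto)
    thus ?thesis by (simp add: d_def)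
  qed
  obtain i0 where i0: "i0 < n" "d i0 > 0"
  proof -
    obtain q where q: "k < q" "q \<le> K" and bq: "block L nk k q \<noteq> 0\<^sub>m n (nk q)"
      using coup by (auto simp: L_def n_def)
    have "\<exists>i<n. \<exists>j<nk q. L$$(s+i, block_start nk q + j) \<noteq> 0"
    proof (rule ccontr)
      assume "\<not> ?thesis"
      hence "block L nk k q = 0\<^sub>m n (nk q)" by (intro eq_matI) (auto simp: block_def n_def s_def)
      with bq show False by simp
    qed
    then obtain i j where ij: "i<n" "j < nk q" and ne: "L$$(s+i, block_start nk q + j) \<noteq> 0" by blast
    define p0 where "p0 = block_start nk q + j"
    have p0N: "p0 < N" using bs_bound[of q] q k1 ij by (simp add: p0_def)
    have p0s: "s + n \<le> p0" using bs_mono[OF q(1)] by (simp add: p0_def)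
    have siN: "s + i < N" using sn ij by simp
    have "L$$(s+i, p0) = - A$$(s+i,p0)" using Lent[OF siN p0N] p0s ij by simp
    hence pos: "A$$(s+i,p0) > 0" using ne A_nonneg siN p0N by (fastforce simp: p0_def less_eq_real_def)
    have nimg: "p0 \<notin> (\<lambda>p. s+p) ` {..<n}" using p0s by auto
    have "rs i + A$$(s+i,p0) = (\<Sum>p\<in>insert p0 ((\<lambda>p. s+p) ` {..<n}). A$$(s+i,p))"
      using nimg by (simp add: rs_img)
    also have "\<dots> \<le> (\<Sum>p<N. A$$(s+i,p))"
      by (rule sum_mono2) (use sn A_nonneg siN p0N in auto)
    finally have "d i > 0" using pos by (simp add: d_def)
    thus ?thesis using that ij by blast
  qed
  define Q where "Q = sym_part (Xi v * Lkk)"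
  have XL: "Xi v * Lkk = mat n n (\<lambda>(i,j). v$i * Lkk$$(i,j))" using Xi_mult[OF v_n Lkk_car] .
  have Q_car: "Q \<in> carrier_mat n n" by (simp add: Q_def XL sym_part_def)
  have Q_ent: "Q$$(i,j) = 1/2*(v$i*Lkk$$(i,j) + v$j*Lkk$$(j,i))" if "i<n" "j<n" for i j
    using that by (simp add: Q_def XL)
  have qf: "x \<bullet> (Q *\<^sub>v x) = (\<Sum>i<n. v$i * d i * (x$i)^2) + 1/2 * (\<Sum>i<n. \<Sum>j<n. v$i * aa i j * (x$i - x$j)^2)"
    if x: "x \<in> carrier_vec n" for x
  proof -
    define S1 where "S1 = (\<Sum>i<n. \<Sum>j<n. v$i * Lkk$$(i,j) * x$i * x$j)"
    have "x \<bullet> (Q *\<^sub>v x) = (\<Sum>i<n. \<Sum>j<n. x$i * Q$$(i,j) * x$j)" by (rule qf_sum[OF Q_car x])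
    also have "\<dots> = (\<Sum>i<n. \<Sum>j<n. 1/2 * (v$i * Lkk$$(i,j) * x$i * x$j) + 1/2 * (v$j * Lkk$$(j,i) * x$i * x$j))"
      by (intro sum.cong refl) (simp add: Q_ent algebra_simps)
    also have "\<dots> = 1/2 * S1 + 1/2 * (\<Sum>i<n. \<Sum>j<n. v$j * Lkk$$(j,i) * x$i * x$j)"
      by (simp add: S1_def sum.distrib sum_distrib_left)
    also have "(\<Sum>i<n. \<Sum>j<n. v$j * Lkk$$(j,i) * x$i * x$j) = S1"
      unfolding S1_def by (subst sum.swap) (simp add: ac_simps)
    also have "1/2 * S1 + 1/2 * S1 = S1" by simp
    also have "S1 = (\<Sum>i<n. \<Sum>j<n. v$i * ((if i=j then rs i + d i else 0) - aa i j) * x$i * x$j)"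
      unfolding S1_def by (intro sum.cong refl) (simp add: Lkk_ent)
    also have "\<dots> = (\<Sum>i<n. v$i * d i * (x$i)^2) + 1/2 * (\<Sum>i<n. \<Sum>j<n. v$i * aa i j * (x$i - x$j)^2)"
      unfolding rs_def by (rule qf_identity) (use eig in \<open>simp add: rs_def\<close>)
    finally show ?thesis .
  qed
  have posQ: "pos_def Q"
    unfolding pos_def_def
  proof (intro conjI ballI impI)
    show "Q \<in> carrier_mat (dim_row Q) (dim_row Q)" using Q_car by simp
    fix x :: "real vec" assume x: "x \<in> carrier_vec (dim_row Q)" and x0: "x \<noteq> 0\<^sub>v (dim_row Q)"
    have x: "x \<in> carrier_vec n" and x0: "x \<noteq> 0\<^sub>v n" using x x0 Q_car by auto
    define T1 where "T1 = (\<Sum>i<n. v$i * d i * (x$i)^2)"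
    define T2 where "T2 = (\<Sum>i<n. \<Sum>j<n. v$i * aa i j * (x$i - x$j)^2)"
    have t1: "\<And>i. i<n \<Longrightarrow> v$i * d i * (x$i)^2 \<ge> 0" using vpos d_nn by (simp add: less_imp_le)
    have t2: "\<And>i j. i<n \<Longrightarrow> j<n \<Longrightarrow> v$i * aa i j * (x$i - x$j)^2 \<ge> 0"
      using vpos aa_nn by (simp add: less_imp_le)
    have T1: "T1 \<ge> 0" unfolding T1_def by (intro sum_nonneg) (simp add: t1)
    have T2: "T2 \<ge> 0" unfolding T2_def by (intro sum_nonneg) (simp add: t2)
    show "0 < x \<bullet> (Q *\<^sub>v x)"
    proof (rule ccontr)
      assume "\<not> ?thesis"
      hence "T1 + 1/2 * T2 \<le> 0" using qf[OF x] by (simp add: T1_def T2_def)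
      hence T10: "T1 = 0" and T20: "T2 = 0" using T1 T2 by auto
      have "v$i0 * d i0 * (x$i0)^2 = 0" using T10 t1 i0 unfolding T1_def
        by (subst (asm) sum_nonneg_eq_0_iff) auto
      hence xi0: "x$i0 = 0" using vpos[OF i0(1)] i0 by simp
      have inner: "(\<Sum>j<n. v$i * aa i j * (x$i - x$j)^2) = 0" if "i<n" for i
        using T20 t2 that unfolding T2_def
        by (subst (asm) sum_nonneg_eq_0_iff) (auto intro: sum_nonneg)
      have edge: "x$i = x$j" if "i<n" "j<n" "aa i j \<noteq> 0" for i j
      proof -
        have "v$i * aa i j * (x$i - x$j)^2 = 0" using inner[OF that(1)] t2 that(1,2)
          by (subst (asm) sum_nonneg_eq_0_iff) auto
        thus ?thesis using vpos[OF that(1)] that(3) by simp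
      qed
      have allc: "x$i = x$i0" if "i<n" for i
        using irr
      proof
        assume "irreducible_mat (block (laplacian A) nk k k)"
        hence irr': "irreducible_mat Lkk" by (simp add: Lkk_def L_def)
        have dimL: "dim_row Lkk = n" using Lkk_car by simp
        have tr: "(i0, i) \<in> {(a, b). a < n \<and> b < n \<and> a \<noteq> b \<and> Lkk $$ (a, b) \<noteq> 0}\<^sup>+"
          using irr' i0(1) that unfolding irreducible_mat_def dimL by blast
        have "x$i0 = x$i" using tr
        proof (induction rule: trancl_induct)
          case (base b)
          thus ?case using edge[of i0 b] Lkk_ent[of i0 b] by auto
        next
          case (step b c)
          thus ?case using edge[of b c] Lkk_ent[of b c] by auto
        qed
        thus ?thesis by simp
      next
        assume "nk k = 1"
        thus ?thesis using that i0 by (simp add: n_def)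
      qed
      have "x = 0\<^sub>v n" using x allc xi0 by (intro eq_vecI) auto
      with x0 show False by simp
    qed
  qed
  define X where "X = Xi v"
  have X_car: "X \<in> carrier_mat n n" using v_n by (simp add: X_def Xi_def)
  have X_ent: "X$$(i,j) = (if i = j then v$i else 0)" if "i<n" "j<n" for i j
    using that v_n by (simp add: X_def Xi_def mat_diag_def)
  have n0: "n > 0" using n1 by simp
  obtain \<mu> where mu_ev: "eigenvalue Q \<mu>" and mu_bd: "\<forall>x\<in>carrier_vec n. \<mu> * (x \<bullet> x) \<le> x \<bullet> (Q *\<^sub>v x)"
    using rayleigh[OF Q_car _ n0] Q_ent by (metis add.commute)
  define E where "E = {e. eigenvalue Q e}"
  have finE: "finite E" using card_finite_spectrum(1)[OF Q_car] by (simp add: E_def spectrum_def)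
  define lam where "lam = lambda_min Q"
  have lamE: "lam \<in> E" using finE mu_ev unfolding lam_def lambda_min_def E_def[symmetric]
    by (intro Min_in) (auto simp: E_def)
  have lam_mu: "lam \<le> \<mu>" using finE mu_ev unfolding lam_def lambda_min_def E_def[symmetric]
    by (intro Min_le) (auto simp: E_def)
  have lam_pos: "lam > 0"
  proof -
    obtain u where u: "eigenvector Q u lam" using lamE by (auto simp: E_def eigenvalue_def)
    have u_n: "u \<in> carrier_vec n" and u0: "u \<noteq> 0\<^sub>v n" and Qu: "Q *\<^sub>v u = lam \<cdot>\<^sub>v u"
      using u Q_car by (auto simp: eigenvector_def)
    have "0 < u \<bullet> (Q *\<^sub>v u)" using posQ u_n u0 Q_car by (auto simp: pos_def_def)
    also have "u \<bullet> (Q *\<^sub>v u) = lam * (u \<bullet> u)" using u_n by (simp add: Qu)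
    finally have "0 < lam * (u \<bullet> u)" .
    moreover have "u \<bullet> u \<ge> 0" using u_n
      by (simp add: scalar_prod_def sum_nonneg)
    ultimately show ?thesis by (metis mult_nonpos_nonneg not_le not_less)
  qed
  have rho_ge: "v$i \<le> rho X" if "i<n" for i
    using rho_Xi[OF v_n that] by (simp add: X_def)
  have rho_nn: "rho X \<ge> 0" using rho_ge[of 0] vpos[of 0] n0 by fastforce
  have loew: "loewner_le X ((rho X / lam) \<cdot>\<^sub>m Q)"
    unfolding loewner_le_def
  proof
    fix x :: "real vec" assume "x \<in> carrier_vec (dim_row X)"
    hence x: "x \<in> carrier_vec n" using X_car by simp
    define c where "c = rho X / lam"
    have c0: "c \<ge> 0" using rho_nn lam_pos by (simp add: c_def)
    have M_car: "c \<cdot>\<^sub>m Q - X \<in> carrier_mat n n" using X_car by (metis minus_carrier_mat)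
    have "x \<bullet> ((c \<cdot>\<^sub>m Q - X) *\<^sub>v x) = (\<Sum>i<n. \<Sum>j<n. x$i * (c \<cdot>\<^sub>m Q - X)$$(i,j) * x$j)"
      by (rule qf_sum[OF M_car x])
    also have "\<dots> = (\<Sum>i<n. \<Sum>j<n. c * (x$i * Q$$(i,j) * x$j) - (if i = j then v$i * (x$i)^2 else 0))"
      using Q_car X_car by (intro sum.cong refl) (auto simp: X_ent algebra_simps power2_eq_square)
    also have "\<dots> = c * (\<Sum>i<n. \<Sum>j<n. x$i * Q$$(i,j) * x$j) - (\<Sum>i<n. v$i * (x$i)^2)"
      by (simp add: sum_subtractf sum_distrib_left sum.delta)
    also have "(\<Sum>i<n. \<Sum>j<n. x$i * Q$$(i,j) * x$j) = x \<bullet> (Q *\<^sub>v x)" by (rule qf_sum[OF Q_car x, symmetric])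
    finally have eq: "x \<bullet> ((c \<cdot>\<^sub>m Q - X) *\<^sub>v x) = c * (x \<bullet> (Q *\<^sub>v x)) - (\<Sum>i<n. v$i * (x$i)^2)" .
    have xx: "x \<bullet> x = (\<Sum>i<n. (x$i)^2)" using x by (simp add: scalar_prod_def lessThan_atLeast0 power2_eq_square)
    have xx0: "x \<bullet> x \<ge> 0" unfolding xx by (simp add: sum_nonneg)
    have "(\<Sum>i<n. v$i * (x$i)^2) \<le> (\<Sum>i<n. rho X * (x$i)^2)"
      by (intro sum_mono mult_right_mono rho_ge) auto
    also have "\<dots> = rho X * (x \<bullet> x)" by (simp add: xx sum_distrib_left)
    also have "\<dots> = c * (lam * (x \<bullet> x))" using lam_pos by (simp add: c_def)
    also have "\<dots> \<le> c * (\<mu> * (x \<bullet> x))" using c0 lam_mu xx0 by (intro mult_left_mono mult_right_mono) auto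
    also have "\<dots> \<le> c * (x \<bullet> (Q *\<^sub>v x))" using c0 mu_bd x by (intro mult_left_mono) auto
    finally show "0 \<le> x \<bullet> (((rho X / lam) \<cdot>\<^sub>m Q - X) *\<^sub>v x)" using eq by (simp add: c_def)
  qed
  have dec: "Q = sym_part (X * Ltilde Lkk) + X * Dmat Lkk"
    unfolding Q_def X_def by (rule sym_decomp[OF Lkk_car v_n])
  have QX: "sym_part (X * Lkk) = Q" by (simp add: Q_def X_def)
  show ?thesis
    unfolding Let_def Lkk_def[symmetric] L_def[symmetric] X_def[symmetric] QX
    using dec posQ loew unfolding lam_def by blast
qed

theorem mainTheorem7:
  fixes A :: "real mat" and N K :: nat and nk :: "nat \<Rightarrow> nat" and \<xi> :: "nat \<Rightarrow> real vec"
  assumes A_carrier: "A \<in> carrier_mat N N"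
    and A_nonneg: "\<forall>i < N. \<forall>j < N. 0 \<le> A $$ (i, j)"
    and A_diag: "\<forall>i < N. A $$ (i, i) = 0"
    and K_pos: "K \<ge> 1"
    and nk_pos: "\<forall>k \<in> {1..K}. nk k \<ge> 1"
    and N_sum: "N = (\<Sum>k\<in>{1..K}. nk k)"
    and upper: "\<forall>k \<in> {1..K}. \<forall>q \<in> {1..K}. q < k \<longrightarrow>
                  block (laplacian A) nk k q = 0\<^sub>m (nk k) (nk q)"
    and diag_irr: "\<forall>k \<in> {1..K}. irreducible_mat (block (laplacian A) nk k k) \<or> nk k = 1"
    and coupled: "\<forall>k \<in> {1..<K}. \<exists>q \<in> {k<..K}.
                  block (laplacian A) nk k q \<noteq> 0\<^sub>m (nk k) (nk q)"
    and xi_dim: "\<forall>k \<in> {1..<K}. \<xi> k \<in> carrier_vec (nk k)"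
    and xi_pos: "\<forall>k \<in> {1..<K}. \<forall>i < nk k. \<xi> k $ i > 0"
    and xi_sum: "\<forall>k \<in> {1..<K}. (\<Sum>i<nk k. \<xi> k $ i) = 1"
    and xi_left_eig: "\<forall>k \<in> {1..<K}.
                  transpose_mat (Ltilde (block (laplacian A) nk k k)) *\<^sub>v \<xi> k = 0\<^sub>v (nk k)"
  shows "\<forall>k \<in> {1..<K}.
     (let Lkk = block (laplacian A) nk k k;
          X = Xi (\<xi> k);
          R = sym_part (X * Ltilde Lkk);
          Q = sym_part (X * Lkk)
      in Q = R + X * Dmat Lkk
         \<and> pos_def Q
         \<and> loewner_le X ((rho X / lambda_min Q) \<cdot>\<^sub>m Q))"
proof
  fix k assume k: "k \<in> {1..<K}"
  show "let Lkk = block (laplacian A) nk k k;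
          X = Xi (\<xi> k);
          R = sym_part (X * Ltilde Lkk);
          Q = sym_part (X * Lkk)
      in Q = R + X * Dmat Lkk
         \<and> pos_def Q
         \<and> loewner_le X ((rho X / lambda_min Q) \<cdot>\<^sub>m Q)"
    by (rule block_result[OF A_carrier A_nonneg A_diag _ _ nk_pos N_sum])
      (use k diag_irr coupled xi_dim xi_pos xi_left_eig in auto)
qed

end
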